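(* Let $n$ be a positive integer such that $n$ is odd and $n\not\equiv 1 \pmod 3$. Then the $n$-th Catalan number $C_n=\frac{1}{n+1}\binom{2n}{n}$ is divisible by $n+2$.
   Context: The Catalan numbers are $C_n=\frac{1}{n+1}\binom{2n}{n}=\frac{(2n)!}{(n+1)!\,n!}$ for $n\ge 0$. *)

theory Defs
  imports Main
begin

text \<open>The n-th Catalan number C_n = (2n choose n)/(n+1); the division is exact.\<close>
definition catalan :: "nat \<Rightarrow> nat" where
  "catalan n = ((2 * n) choose n) div (n + 1)"

end

theory Submission
  imports Defs
begin

lemma cat_dvd: "(n + 1) dvd ((2 * n) choose n)"
proof -
  have e: "Suc (2*n) * ((2*n) choose n) = (Suc (2*n) choose Suc n) * Suc n"
    by (rule Suc_times_binomial_eq)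
  have "coprime (n+1) (Suc (2*n))"
  proof -
    have "Suc (2*n) = 2*(n+1) - 1" by simp
    have "coprime (n+1) (2*(n+1) - 1)"
      by (metis coprime_diff_one_right_nat add_gr_0 less_numeral_extra(1) dvd_triv_right
            coprime_commute coprime_mult_left_iff mult_pos_pos zero_less_numeral)
    thus ?thesis by simp
  qed
  moreover have "(n+1) dvd Suc (2*n) * ((2*n) choose n)" unfolding e by (metis Suc_eq_plus1 dvd_triv_right)
  ultimately show ?thesis by (metis coprime_dvd_mult_right_iff)
qed

lemma cat_mult: "catalan n * (n + 1) = (2 * n) choose n"
  using cat_dvd[of n] unfolding catalan_def by (metis dvd_div_mult_self)

lemma cat_rec: "(n + 2) * catalan (n + 1) = 2 * (2 * n + 1) * catalan n"
proof -
  define B where "B = (2*n) choose n"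
  define B' where "B' = (2*(n+1)) choose (n+1)"
  have e1: "Suc (2*n) * B = (Suc (2*n) choose Suc n) * Suc n"
    unfolding B_def by (rule Suc_times_binomial_eq)
  have sym: "(Suc (2*n) choose Suc n) = (Suc (2*n) choose n)"
    using binomial_symmetric[of n "Suc (2*n)"] by simp
  have e2: "Suc n * (Suc (Suc (2*n)) choose Suc n) = Suc (Suc (2*n)) * (Suc (2*n) choose n)"
    by (rule Suc_times_binomial)
  have "2*(n+1) = Suc (Suc (2*n))" by simp
  hence e2': "(n+1) * B' = 2*(n+1) * (Suc (2*n) choose n)" using e2 unfolding B'_def by simp
  from e2' have "(n+1) * B' = 2*(n+1) * (Suc (2*n) choose n)" .
  also have "2*(n+1) * (Suc (2*n) choose n) = 2 * ((Suc (2*n) choose Suc n) * Suc n)"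
    using sym by simp
  also have "\<dots> = 2 * (Suc (2*n) * B)" using e1 by simp
  finally have "(n+1) * B' = 2 * (2*n+1) * B" by simp
  moreover have "B = catalan n * (n+1)" unfolding B_def by (rule cat_mult[symmetric])
  moreover have "B' = catalan (n+1) * (n+2)" unfolding B'_def using cat_mult[of "n+1"] by simp
  ultimately have "(n+1) * ((n+2) * catalan (n+1)) = (n+1) * (2 * (2*n+1) * catalan n)"
    by (simp add: algebra_simps)
  thus ?thesis by (metis mult_left_cancel add_gr_0 zero_less_one less_not_refl2)
qed

theorem theorem2p1:
  fixes n :: nat
  assumes "n > 0" and "odd n" and "n mod 3 \<noteq> 1"
  shows "(n + 2) dvd catalan n"
proof -
  have d: "(n+2) dvd (2 * (2*n+1)) * catalan n" using cat_rec[of n] by (metis dvd_triv_left)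
  have c2: "coprime (n+2) 2" using assms(2) by simp
  have c3: "coprime (n+2) (2*n+1)"
  proof -
    have "gcd (n+2) (2*n+1) dvd 3"
    proof -
      have "gcd (n+2) (2*n+1) dvd 2*(n+2) - (2*n+1)"
        by (intro dvd_diff_nat dvd_mult gcd_dvd1 gcd_dvd2)
      moreover have "2*(n+2) - (2*n+1) = 3" by simp
      ultimately show ?thesis by simp
    qed
    moreover have "\<not> 3 dvd (n+2)" using assms(3) by presburger
    ultimately have "gcd (n+2) (2*n+1) \<noteq> 3" by (metis gcd_dvd1)
    moreover have "gcd (n+2) (2*n+1) dvd 3" by fact
    moreover have "gcd (n+2) (2*n+1) \<le> 3" using \<open>gcd (n+2) (2*n+1) dvd 3\<close> by (rule dvd_imp_le) simp
    moreover have "gcd (n+2) (2*n+1) \<noteq> 2" using \<open>gcd (n+2) (2*n+1) dvd 3\<close> by auto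
    moreover have "gcd (n+2) (2*n+1) \<noteq> 0" by simp
    ultimately have "gcd (n+2) (2*n+1) = 1" by linarith
    thus ?thesis by (simp add: coprime_iff_gcd_eq_1)
  qed
  have "coprime (n+2) (2 * (2*n+1))" using c2 c3 by (simp only: coprime_mult_right_iff)
  thus ?thesis using d by (metis coprime_dvd_mult_right_iff)
qed

end
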